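(* For every $n\ge1$, $|\mathcal{B}_n(123)|=C(\lceil n/2\rceil)$, where $C(m)=\frac{1}{m+1}\binom{2m}{m}$ is the $m$-th Catalan number.
   Context: A ballot permutation is a $\pi\in\mathfrak{S}_n$ such that every prefix $\pi_1\cdots\pi_i$ has at most as many descents ($\pi_j>\pi_{j+1}$) as ascents ($\pi_j<\pi_{j+1}$); $\mathcal{B}_n$ denotes the set of them. A permutation avoids the pattern $\sigma\in\mathfrak{S}_k$ if it has no subsequence order-isomorphic to $\sigma$; $\mathcal{B}_n(\sigma)$ is the set of $\sigma$-avoiding elements of $\mathcal{B}_n$. *)

theory Defs
  imports Main
begin

definition perms :: "nat \<Rightarrow> nat list set" where
  "perms n = {xs. distinct xs \<and> set xs = {1..n}}"

text \<open>Number of descents / ascents in the prefix of length i (positions j with j+1 < i, 0-based).\<close>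
definition descents_prefix :: "nat list \<Rightarrow> nat \<Rightarrow> nat" where
  "descents_prefix xs i = card {j. j + 1 < i \<and> j + 1 < length xs \<and> xs ! j > xs ! (j + 1)}"

definition ascents_prefix :: "nat list \<Rightarrow> nat \<Rightarrow> nat" where
  "ascents_prefix xs i = card {j. j + 1 < i \<and> j + 1 < length xs \<and> xs ! j < xs ! (j + 1)}"

definition ballot :: "nat list \<Rightarrow> bool" where
  "ballot xs \<longleftrightarrow> (\<forall>i \<le> length xs. descents_prefix xs i \<le> ascents_prefix xs i)"

definition contains_123 :: "nat list \<Rightarrow> bool" where
  "contains_123 xs \<longleftrightarrow> (\<exists>a b c. a < b \<and> b < c \<and> c < length xs \<and>
      xs ! a < xs ! b \<and> xs ! b < xs ! c)"

definition ballot_avoid_123 :: "nat \<Rightarrow> nat list set" where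
  "ballot_avoid_123 n = {xs \<in> perms n. ballot xs \<and> \<not> contains_123 xs}"

definition catalan :: "nat \<Rightarrow> nat" where
  "catalan m = ((2 * m) choose m) div (m + 1)"

end

theory Submission
  imports Defs
begin

definition g :: "nat \<Rightarrow> nat \<Rightarrow> int" where
  "g p q = int ((p+q) choose q) - (if q = 0 then 0 else int ((p+q) choose (q-1)))"

lemma g_0: "g p 0 = 1" by (simp add: g_def)

lemma g_rec_lt: assumes "q' < p'" shows "g (Suc p') (Suc q') = g p' (Suc q') + g (Suc p') q'"
proof -
  have e1: "((Suc p' + Suc q') choose (Suc q')) = ((p' + Suc q') choose q') + ((p' + Suc q') choose (Suc q'))"
    by simp
  show ?thesis
  proof (cases q')
    case 0 then show ?thesis using e1 by (simp add: g_def)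
  next
    case (Suc r)
    have e2: "((Suc p' + Suc q') choose q') = ((p' + Suc q') choose r) + ((p' + Suc q') choose q')"
      using Suc by simp
    show ?thesis using e1 e2 Suc by (simp add: g_def algebra_simps)
  qed
qed

lemma g_rec_eq: "g (Suc p) (Suc p) = g (Suc p) p"
proof -
  have e1: "((Suc p + Suc p) choose (Suc p)) = ((p + Suc p) choose p) + ((p + Suc p) choose (Suc p))"
    by simp
  have sym: "((p + Suc p) choose (Suc p)) = ((p + Suc p) choose p)"
    using binomial_symmetric[of "Suc p" "p + Suc p"] by simp
  show ?thesis
  proof (cases p)
    case 0 then show ?thesis by (simp add: g_def)
  next
    case (Suc r)
    have e2: "((Suc p + Suc p) choose p) = ((p + Suc p) choose r) + ((p + Suc p) choose p)"
      using Suc by simp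
    have e3: "Suc p + p = p + Suc p" by simp
    show ?thesis using e1 e2 sym Suc by (simp add: g_def algebra_simps)
  qed
qed

lemma g_catalan: "g k k = int (((2*k) choose k) div (k+1))"
proof (cases k)
  case 0 then show ?thesis by (simp add: g_def)
next
  case (Suc r)
  have key: "((2*k) choose r) * (k+1) = ((2*k) choose k) * k"
    using Suc by (metis Suc_1 Suc_eq_plus1 Suc_times_binomial_add add_Suc
    add_mult_distrib mult.commute mult_numeral_1 numeral_One)
  have le: "(2*k) choose r \<le> (2*k) choose k"
  proof -
    have "((2*k) choose r) * (k+1) \<le> ((2*k) choose k) * (k+1)" using key by simp
    then show ?thesis using mult_le_cancel2[of "(2*k) choose r" "k+1"] by simp
  qed
  have eq: "(((2*k) choose k) - ((2*k) choose r)) * (k+1) = ((2*k) choose k)"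
    using key by (simp add: diff_mult_distrib algebra_simps)
  have "((((2*k) choose k) - ((2*k) choose r)) * (k+1)) div (k+1) = ((2*k) choose k) - ((2*k) choose r)"
    by (rule nonzero_mult_div_cancel_right) simp
  then have "((2*k) choose k) div (k+1) = ((2*k) choose k) - ((2*k) choose r)"
    unfolding eq .
  then show ?thesis using Suc le by (simp add: g_def mult_2 of_nat_diff)
qed

definition Q :: "nat set \<Rightarrow> nat \<Rightarrow> nat \<Rightarrow> (nat list \<times> nat list) set" where
 "Q S p q = {(as,bs). length as = p \<and> length bs = q \<and> q \<le> p \<and> sorted_wrt (>) as \<and> sorted_wrt (>) bs
     \<and> set as \<inter> set bs = {} \<and> set as \<union> set bs = S \<and> (\<forall>i<q. bs!i < as!i)}"

lemma finite_Q: assumes "finite S" shows "finite (Q S p q)"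
proof -
  have "Q S p q \<subseteq> {xs. set xs \<subseteq> S \<and> length xs = p} \<times> {xs. set xs \<subseteq> S \<and> length xs = q}"
    unfolding Q_def by auto
  then show ?thesis using finite_lists_length_eq[OF assms] by (meson finite_SigmaI finite_subset)
qed

lemma sorted_last_min:
  assumes "sorted_wrt (>) (xs::nat list)" "m \<in> set xs" "\<forall>x\<in>set xs. m \<le> x"
  shows "xs = butlast xs @ [m]"
proof -
  have ne: "xs \<noteq> []" using assms by auto
  obtain i where i: "i < length xs" "xs!i = m" using assms(2) by (metis in_set_conv_nth)
  have "i = length xs - 1"
  proof (rule ccontr)
    assume "i \<noteq> length xs - 1"
    then have "i < length xs - 1" using i by auto
    then have "xs!i > xs!(length xs - 1)" using assms(1) sorted_wrt_nth_less by fastforce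
    moreover have "xs!(length xs - 1) \<in> set xs" using ne by simp
    ultimately show False using assms(3) i by fastforce
  qed
  then have "last xs = m" using i ne by (simp add: last_conv_nth)
  then show ?thesis using ne by (metis append_butlast_last_id)
qed

lemma Q_A1:
  assumes fin: "finite S" and m: "m = Min S" and ne: "S \<noteq> {}" and qp: "q < Suc p'"
  shows "{x \<in> Q S (Suc p') q. m \<in> set (fst x)} = (\<lambda>(as,bs). (as@[m],bs)) ` Q (S-{m}) p' q"
proof
  have mS: "m \<in> S" "\<forall>x\<in>S. m \<le> x" using m fin ne by auto
  show "{x \<in> Q S (Suc p') q. m \<in> set (fst x)} \<subseteq> (\<lambda>(as,bs). (as@[m],bs)) ` Q (S-{m}) p' q"
  proof clarify
    fix as bs assume A: "(as,bs) \<in> Q S (Suc p') q" "m \<in> set (fst (as,bs))"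
    then have props: "length as = Suc p'" "length bs = q" "sorted_wrt (>) as" "sorted_wrt (>) bs"
       "set as \<inter> set bs = {}" "set as \<union> set bs = S" "\<forall>i<q. bs!i < as!i"
      unfolding Q_def by auto
    have "as = butlast as @ [m]" using sorted_last_min[OF props(3)] A(2) mS props(6) by auto
    then obtain as' where as': "as = as' @ [m]" by blast
    have s': "sorted_wrt (>) as'" "\<forall>x\<in>set as'. x > m" using props(3) as' by (auto simp: sorted_wrt_append)
    have "(as',bs) \<in> Q (S-{m}) p' q"
      unfolding Q_def using props as' s' A(2) qp
      by (auto simp: nth_append)
    then show "(as,bs) \<in> (\<lambda>(as,bs). (as@[m],bs)) ` Q (S-{m}) p' q" using as' by force
  qed
  show "(\<lambda>(as,bs). (as@[m],bs)) ` Q (S-{m}) p' q \<subseteq> {x \<in> Q S (Suc p') q. m \<in> set (fst x)}"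
  proof
    fix x assume "x \<in> (\<lambda>(as,bs). (as@[m],bs)) ` Q (S-{m}) p' q"
    then obtain as bs where x: "x = (as@[m],bs)" and A: "(as,bs) \<in> Q (S-{m}) p' q" by auto
    then have props: "length as = p'" "length bs = q" "sorted_wrt (>) as" "sorted_wrt (>) bs"
       "set as \<inter> set bs = {}" "set as \<union> set bs = S-{m}" "\<forall>i<q. bs!i < as!i" "q \<le> p'"
      unfolding Q_def by auto
    have gt: "\<forall>x\<in>set as. x > m"
    proof
      fix x assume "x \<in> set as"
      then have "x \<in> S" "x \<noteq> m" using props(6) by auto
      then show "x > m" using mS(2) le_neq_implies_less by fastforce
    qed
    have mb: "m \<notin> set bs" using props(6) by auto
    have "(as@[m],bs) \<in> Q S (Suc p') q" unfolding Q_def using props gt mb mS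
      by (auto simp: sorted_wrt_append nth_append)
    then show "x \<in> {x \<in> Q S (Suc p') q. m \<in> set (fst x)}" using x by simp
  qed
qed

lemma Q_A1_empty:
  assumes fin: "finite S" and m: "m = Min S" and ne: "S \<noteq> {}"
  shows "{x \<in> Q S p p. m \<in> set (fst x)} = {}"
proof (rule ccontr)
  assume "{x \<in> Q S p p. m \<in> set (fst x)} \<noteq> {}"
  then obtain as bs where A: "(as,bs) \<in> Q S p p" "m \<in> set as" by auto
  have mS: "m \<in> S" "\<forall>x\<in>S. m \<le> x" using m fin ne by auto
  have props: "length as = p" "length bs = p" "sorted_wrt (>) as"
       "set as \<inter> set bs = {}" "set as \<union> set bs = S" "\<forall>i<p. bs!i < as!i"
    using A(1) unfolding Q_def by auto
  have e: "as = butlast as @ [m]" using sorted_last_min[OF props(3)] A(2) mS props(5) by auto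
  have p0: "p > 0" using A(2) props(1) by (cases as) auto
  have "as!(p-1) = m" using e props(1) p0 by (metis diff_Suc_1 length_butlast nth_append_length)
  then have "bs!(p-1) < m" using props(6) p0 by force
  moreover have "bs!(p-1) \<in> S" using props(2,5) p0 by auto
  ultimately show False using mS by force
qed

lemma Q_A2:
  assumes fin: "finite S" and m: "m = Min S" and ne: "S \<noteq> {}" and qp: "Suc q' \<le> p"
  shows "{x \<in> Q S p (Suc q'). m \<in> set (snd x)} = (\<lambda>(as,bs). (as,bs@[m])) ` Q (S-{m}) p q'"
proof
  have mS: "m \<in> S" "\<forall>x\<in>S. m \<le> x" using m fin ne by auto
  show "{x \<in> Q S p (Suc q'). m \<in> set (snd x)} \<subseteq> (\<lambda>(as,bs). (as,bs@[m])) ` Q (S-{m}) p q'"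
  proof clarify
    fix as bs assume A: "(as,bs) \<in> Q S p (Suc q')" "m \<in> set (snd (as,bs))"
    then have props: "length as = p" "length bs = Suc q'" "sorted_wrt (>) as" "sorted_wrt (>) bs"
       "set as \<inter> set bs = {}" "set as \<union> set bs = S" "\<forall>i<Suc q'. bs!i < as!i"
      unfolding Q_def by auto
    have "bs = butlast bs @ [m]" using sorted_last_min[OF props(4)] A(2) mS props(6) by auto
    then obtain bs' where bs': "bs = bs' @ [m]" by blast
    have s': "sorted_wrt (>) bs'" "\<forall>x\<in>set bs'. x > m" using props(4) bs' by (auto simp: sorted_wrt_append)
    have c: "\<forall>i<q'. bs'!i < as!i"
    proof (intro allI impI)
      fix i assume "i < q'"
      then show "bs'!i < as!i" using props(7) bs' props(2) by (metis less_SucI nth_append length_append_singleton Suc_inject)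
    qed
    have "(as,bs') \<in> Q (S-{m}) p q'"
      unfolding Q_def using props bs' s' A(2) qp c
      by auto
    then show "(as,bs) \<in> (\<lambda>(as,bs). (as,bs@[m])) ` Q (S-{m}) p q'" using bs' by force
  qed
  show "(\<lambda>(as,bs). (as,bs@[m])) ` Q (S-{m}) p q' \<subseteq> {x \<in> Q S p (Suc q'). m \<in> set (snd x)}"
  proof
    fix x assume "x \<in> (\<lambda>(as,bs). (as,bs@[m])) ` Q (S-{m}) p q'"
    then obtain as bs where x: "x = (as,bs@[m])" and A: "(as,bs) \<in> Q (S-{m}) p q'" by auto
    then have props: "length as = p" "length bs = q'" "sorted_wrt (>) as" "sorted_wrt (>) bs"
       "set as \<inter> set bs = {}" "set as \<union> set bs = S-{m}" "\<forall>i<q'. bs!i < as!i" "q' \<le> p"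
      unfolding Q_def by auto
    have gt: "\<forall>x\<in>set bs. x > m"
    proof
      fix x assume "x \<in> set bs"
      then have "x \<in> S" "x \<noteq> m" using props(6) by auto
      then show "x > m" using mS(2) le_neq_implies_less by fastforce
    qed
    have ma: "m \<notin> set as" using props(6) by auto
    have aq: "as!q' > m" using props(1,6) qp mS by (metis Diff_iff Suc_le_lessD UnI1 le_neq_implies_less nth_mem singletonI)
    have c: "\<forall>i<Suc q'. (bs@[m])!i < as!i"
      using props(2,7) aq by (auto simp: nth_append less_Suc_eq)
    have "(as,bs@[m]) \<in> Q S p (Suc q')" unfolding Q_def using props gt ma mS c qp
      by (auto simp: sorted_wrt_append)
    then show "x \<in> {x \<in> Q S p (Suc q'). m \<in> set (snd x)}" using x by simp
  qed
qed

lemma Q_split: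
  assumes fin: "finite S" and m: "m = Min S" and ne: "S \<noteq> {}"
  shows "Q S p q = {x \<in> Q S p q. m \<in> set (fst x)} \<union> {x \<in> Q S p q. m \<in> set (snd x)}"
    and "{x \<in> Q S p q. m \<in> set (fst x)} \<inter> {x \<in> Q S p q. m \<in> set (snd x)} = {}"
proof -
  have mS: "m \<in> S" using m fin ne by auto
  show "Q S p q = {x \<in> Q S p q. m \<in> set (fst x)} \<union> {x \<in> Q S p q. m \<in> set (snd x)}"
    using mS unfolding Q_def by auto
  show "{x \<in> Q S p q. m \<in> set (fst x)} \<inter> {x \<in> Q S p q. m \<in> set (snd x)} = {}"
    unfolding Q_def by auto
qed

lemma card_Q:
  "\<And>S p q. finite S \<Longrightarrow> card S = n \<Longrightarrow> p + q = n \<Longrightarrow> q \<le> p \<Longrightarrow> int (card (Q S p q)) = g p q"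
proof (induction n)
  case 0
  then have "S = {}" "p = 0" "q = 0" by auto
  then have "Q S p q = {([],[])}" unfolding Q_def by auto
  then show ?case using \<open>p=0\<close> \<open>q=0\<close> by (simp add: g_def)
next
  case (Suc n S p q)
  define m where "m = Min S"
  have ne: "S \<noteq> {}" using Suc.prems by auto
  have fin': "finite (S - {m})" "card (S-{m}) = n"
    using Suc.prems ne m_def by auto
  have inj1: "inj_on (\<lambda>(as,bs). (as@[m],bs)) X" for X :: "(nat list \<times> nat list) set"
    by (rule inj_onI) auto
  have inj2: "inj_on (\<lambda>(as,bs). (as,bs@[m])) X" for X :: "(nat list \<times> nat list) set"
    by (rule inj_onI) auto
  note spl = Q_split[OF Suc.prems(1) m_def ne, of p q]
  have finA: "finite {x \<in> Q S p q. m \<in> set (fst x)}" "finite {x \<in> Q S p q. m \<in> set (snd x)}"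
    using finite_Q[OF Suc.prems(1)] by auto
  have cardsum: "card (Q S p q) = card {x \<in> Q S p q. m \<in> set (fst x)} + card {x \<in> Q S p q. m \<in> set (snd x)}"
    using card_Un_disjoint[OF finA spl(2)] unfolding spl(1)[symmetric] .
  have c1: "int (card {x \<in> Q S p q. m \<in> set (fst x)}) = (if q < p then g (p-1) q else 0)"
  proof (cases "q < p")
    case True
    then obtain p' where p': "p = Suc p'" by (cases p) auto
    have "card {x \<in> Q S p q. m \<in> set (fst x)} = card (Q (S-{m}) p' q)"
      using Q_A1[OF Suc.prems(1) m_def ne, of q p'] True p' card_image[OF inj1] by simp
    moreover have "int (card (Q (S-{m}) p' q)) = g p' q"
      using Suc.IH[OF fin'] Suc.prems True p' by simp
    ultimately show ?thesis using True p' by simp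
  next
    case False
    then have "q = p" using Suc.prems by simp
    then have "{x \<in> Q S p q. m \<in> set (fst x)} = {}" using Q_A1_empty[OF Suc.prems(1) m_def ne, of p] by simp
    then show ?thesis using False by (simp only: card.empty if_False of_nat_0)
  qed
  have c2: "int (card {x \<in> Q S p q. m \<in> set (snd x)}) = (if 0 < q then g p (q-1) else 0)"
  proof (cases q)
    case (Suc q')
    have "card {x \<in> Q S p q. m \<in> set (snd x)} = card (Q (S-{m}) p q')"
      using Q_A2[OF Suc.prems(1) m_def ne, of q' p] \<open>q \<le> p\<close> Suc card_image[OF inj2] by simp
    moreover have "int (card (Q (S-{m}) p q')) = g p q'"
      using Suc.IH[OF fin'] Suc.prems Suc by simp
    ultimately show ?thesis using Suc by simp
  next
    case 0
    then have "{x \<in> Q S p q. m \<in> set (snd x)} = {}" unfolding Q_def by auto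
    then show ?thesis using 0 by (simp only: card.empty of_nat_0) simp
  qed
  show ?case
  proof (cases "q < p")
    case True
    then obtain p' where p': "p = Suc p'" by (cases p) auto
    show ?thesis
    proof (cases q)
      case 0 then show ?thesis using cardsum c1 c2 p' by (simp add: g_0)
    next
      case (Suc q')
      then show ?thesis using cardsum c1 c2 p' True g_rec_lt[of q' p'] by simp
    qed
  next
    case False
    then have qp: "q = p" using Suc.prems by simp
    then obtain p' where p': "p = Suc p'" using Suc.prems by (cases p) auto
    show ?thesis using cardsum c1 c2 qp p' g_rec_eq[of p'] by simp
  qed
qed

definition H :: "nat set \<Rightarrow> nat \<Rightarrow> nat \<Rightarrow> (nat list \<times> nat list \<times> nat) set" where
 "H S p q = {(as,bs,c). c \<in> S \<and> (as,bs) \<in> Q (S-{c}) p q \<and> (as \<noteq> [] \<longrightarrow> c < last as)}"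

lemma finite_H: assumes "finite S" shows "finite (H S p q)"
proof -
  have "H S p q \<subseteq> {xs. set xs \<subseteq> S \<and> length xs = p} \<times> {xs. set xs \<subseteq> S \<and> length xs = q} \<times> S"
    unfolding H_def Q_def by auto
  then show ?thesis using finite_lists_length_eq[OF assms] assms by (meson finite_SigmaI finite_subset)
qed

lemma Q_last_in: "(as,bs) \<in> Q S p q \<Longrightarrow> as \<noteq> [] \<Longrightarrow> last as \<in> S"
  unfolding Q_def by auto

lemma H_B1:
  assumes fin: "finite S" and m: "m = Min S" and ne: "S \<noteq> {}"
  shows "{x \<in> H S p q. snd (snd x) = m} = (\<lambda>(as,bs). (as,bs,m)) ` Q (S-{m}) p q"
proof
  have mS: "m \<in> S" "\<forall>x\<in>S. m \<le> x" using m fin ne by auto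
  show "{x \<in> H S p q. snd (snd x) = m} \<subseteq> (\<lambda>(as,bs). (as,bs,m)) ` Q (S-{m}) p q"
    unfolding H_def by auto
  show "(\<lambda>(as,bs). (as,bs,m)) ` Q (S-{m}) p q \<subseteq> {x \<in> H S p q. snd (snd x) = m}"
  proof
    fix x assume "x \<in> (\<lambda>(as,bs). (as,bs,m)) ` Q (S-{m}) p q"
    then obtain as bs where x: "x = (as,bs,m)" and A: "(as,bs) \<in> Q (S-{m}) p q" by auto
    have "as \<noteq> [] \<longrightarrow> m < last as"
    proof
      assume "as \<noteq> []"
      then have "last as \<in> S - {m}" using Q_last_in[OF A] by simp
      then show "m < last as" using mS(2) le_neq_implies_less by fastforce
    qed
    then show "x \<in> {x \<in> H S p q. snd (snd x) = m}" using x A mS unfolding H_def by auto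
  qed
qed

lemma H_B2_0:
  assumes fin: "finite S" and m: "m = Min S" and ne: "S \<noteq> {}"
  shows "{x \<in> H S p 0. snd (snd x) \<noteq> m} = {}"
proof (rule ccontr)
  assume "{x \<in> H S p 0. snd (snd x) \<noteq> m} \<noteq> {}"
  then obtain as bs c where A: "(as,bs,c) \<in> H S p 0" "c \<noteq> m" by auto
  have mS: "m \<in> S" "\<forall>x\<in>S. m \<le> x" using m fin ne by auto
  have props: "c \<in> S" "bs = []" "sorted_wrt (>) as" "set as \<union> set bs = S - {c}" "as \<noteq> [] \<longrightarrow> c < last as"
    using A(1) unfolding H_def Q_def by auto
  have ma: "m \<in> set as" using props mS A(2) by auto
  then have "as = butlast as @ [m]" using sorted_last_min[OF props(3)] mS props(4) by auto
  then have "last as = m" by (metis last_snoc)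
  then show False using props(5) ma mS(2) props(1) by force
qed

lemma H_B2:
  assumes fin: "finite S" and m: "m = Min S" and ne: "S \<noteq> {}" and qp: "Suc q' \<le> p"
  shows "{x \<in> H S p (Suc q'). snd (snd x) \<noteq> m} = (\<lambda>(as,bs,c). (as,bs@[m],c)) ` H (S-{m}) p q'"
proof
  have mS: "m \<in> S" "\<forall>x\<in>S. m \<le> x" using m fin ne by auto
  show "{x \<in> H S p (Suc q'). snd (snd x) \<noteq> m} \<subseteq> (\<lambda>(as,bs,c). (as,bs@[m],c)) ` H (S-{m}) p q'"
  proof
    fix x assume "x \<in> {x \<in> H S p (Suc q'). snd (snd x) \<noteq> m}"
    then obtain as bs c where x: "x = (as,bs,c)" and A: "(as,bs,c) \<in> H S p (Suc q')" "c \<noteq> m"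
      by (cases x) auto
    have props: "c \<in> S" "(as,bs) \<in> Q (S-{c}) p (Suc q')" "as \<noteq> [] \<longrightarrow> c < last as"
      using A(1) unfolding H_def by auto
    have qprops: "sorted_wrt (>) as" "set as \<union> set bs = S - {c}"
      using props(2) unfolding Q_def by auto
    have mSc: "m \<in> S - {c}" using mS A(2) by auto
    have mmin: "m = Min (S - {c})"
      using mSc mS fin by (metis Diff_iff Min_eqI finite_Diff)
    have "m \<notin> set as"
    proof
      assume ma: "m \<in> set as"
      then have "as = butlast as @ [m]" using sorted_last_min[OF qprops(1)] mS qprops(2) by auto
      then have "last as = m" by (metis last_snoc)
      then show False using props(3) ma mS(2) props(1) by force
    qed
    then have mb: "m \<in> set (snd (as,bs))" using mSc qprops(2) by auto
    have "(as,bs) \<in> (\<lambda>(as,bs). (as,bs@[m])) ` Q (S-{c}-{m}) p q'"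
      using Q_A2[OF _ mmin _ qp] fin mSc props(2) mb by blast
    then obtain bs' where bs': "bs = bs'@[m]" "(as,bs') \<in> Q (S-{c}-{m}) p q'" by auto
    have "S-{c}-{m} = S-{m}-{c}" by auto
    then have "(as,bs',c) \<in> H (S-{m}) p q'" using bs' props A(2) unfolding H_def by auto
    then show "x \<in> (\<lambda>(as,bs,c). (as,bs@[m],c)) ` H (S-{m}) p q'" using x bs' by force
  qed
  show "(\<lambda>(as,bs,c). (as,bs@[m],c)) ` H (S-{m}) p q' \<subseteq> {x \<in> H S p (Suc q'). snd (snd x) \<noteq> m}"
  proof
    fix x assume "x \<in> (\<lambda>(as,bs,c). (as,bs@[m],c)) ` H (S-{m}) p q'"
    then obtain as bs c where x: "x = (as,bs@[m],c)" and A: "(as,bs,c) \<in> H (S-{m}) p q'" by auto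
    have props: "c \<in> S - {m}" "(as,bs) \<in> Q (S-{m}-{c}) p q'" "as \<noteq> [] \<longrightarrow> c < last as"
      using A unfolding H_def by auto
    have mSc: "m \<in> S - {c}" using mS props(1) by auto
    have mmin: "m = Min (S - {c})"
      using mSc mS fin by (metis Diff_iff Min_eqI finite_Diff)
    have ne': "S - {c} \<noteq> {}" using mSc by auto
    have "S-{m}-{c} = S-{c}-{m}" by auto
    then have "(as,bs@[m]) \<in> (\<lambda>(as,bs). (as,bs@[m])) ` Q (S-{c}-{m}) p q'" using props(2) by auto
    then have "(as,bs@[m]) \<in> Q (S-{c}) p (Suc q')"
      using Q_A2[OF _ mmin ne' qp] fin by blast
    then show "x \<in> {x \<in> H S p (Suc q'). snd (snd x) \<noteq> m}"
      using x props unfolding H_def by auto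
  qed
qed

lemma card_H:
  "\<And>S. finite S \<Longrightarrow> card S = Suc (p + q) \<Longrightarrow> q \<le> p \<Longrightarrow> int (card (H S p q)) = g (Suc p) q"
proof (induction q)
  case (0 S)
  define m where "m = Min S"
  have ne: "S \<noteq> {}" using 0 by auto
  have spl: "H S p 0 = {x \<in> H S p 0. snd (snd x) = m} \<union> {x \<in> H S p 0. snd (snd x) \<noteq> m}" by auto
  have e: "{x \<in> H S p 0. snd (snd x) \<noteq> m} = {}" using H_B2_0[OF 0(1) m_def ne] .
  from spl have "H S p 0 = (\<lambda>(as,bs). (as,bs,m)) ` Q (S-{m}) p 0"
    unfolding e H_B1[OF 0(1) m_def ne, of p 0] by simp
  moreover have "inj_on (\<lambda>(as,bs). (as,bs,m)) X" for X :: "(nat list \<times> nat list) set"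
    by (rule inj_onI) auto
  ultimately have "card (H S p 0) = card (Q (S-{m}) p 0)" by (simp add: card_image)
  moreover have "int (card (Q (S-{m}) p 0)) = g p 0"
    using card_Q[of "S-{m}" "card (S-{m})" p 0] 0 ne m_def by simp
  ultimately show ?case by (simp add: g_0)
next
  case (Suc q S)
  define m where "m = Min S"
  have ne: "S \<noteq> {}" using Suc.prems by auto
  have fin': "finite (S - {m})" "card (S-{m}) = Suc (p + q)"
    using Suc.prems ne m_def by auto
  have spl: "H S p (Suc q) = {x \<in> H S p (Suc q). snd (snd x) = m} \<union> {x \<in> H S p (Suc q). snd (snd x) \<noteq> m}"
    by auto
  have dis: "{x \<in> H S p (Suc q). snd (snd x) = m} \<inter> {x \<in> H S p (Suc q). snd (snd x) \<noteq> m} = {}" by auto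
  have finB: "finite {x \<in> H S p (Suc q). snd (snd x) = m}" "finite {x \<in> H S p (Suc q). snd (snd x) \<noteq> m}"
    using finite_H[OF Suc.prems(1)] by auto
  have cardsum: "card (H S p (Suc q)) = card {x \<in> H S p (Suc q). snd (snd x) = m} + card {x \<in> H S p (Suc q). snd (snd x) \<noteq> m}"
    using card_Un_disjoint[OF finB dis] unfolding spl[symmetric] .
  have inj1: "inj_on (\<lambda>(as,bs). (as,bs,m)) X" for X :: "(nat list \<times> nat list) set"
    by (rule inj_onI) auto
  have inj2: "inj_on (\<lambda>(as,bs,c). (as,bs@[m],c)) X" for X :: "(nat list \<times> nat list \<times> nat) set"
    by (rule inj_onI) auto
  have c1: "card {x \<in> H S p (Suc q). snd (snd x) = m} = card (Q (S-{m}) p (Suc q))"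
    using H_B1[OF Suc.prems(1) m_def ne, of p "Suc q"] card_image[OF inj1] by simp
  have c1': "int (card (Q (S-{m}) p (Suc q))) = g p (Suc q)"
    using card_Q[of "S-{m}" "card (S-{m})" p "Suc q"] Suc.prems fin' by simp
  have c2: "card {x \<in> H S p (Suc q). snd (snd x) \<noteq> m} = card (H (S-{m}) p q)"
    using H_B2[OF Suc.prems(1) m_def ne Suc.prems(3)] card_image[OF inj2] by simp
  have c2': "int (card (H (S-{m}) p q)) = g (Suc p) q"
    using Suc.IH[OF fin'] Suc.prems by simp
  show ?case using cardsum c1 c1' c2 c2' g_rec_lt[of q p] Suc.prems(3) by simp
qed

definition alt :: "nat list \<Rightarrow> bool" where
  "alt xs \<longleftrightarrow> (\<forall>j. j+1 < length xs \<longrightarrow> (even j \<longleftrightarrow> xs!j < xs!(j+1)))"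

definition chn :: "nat list \<Rightarrow> bool" where
  "chn xs \<longleftrightarrow> (\<forall>j. odd j \<longrightarrow> j+2 < length xs \<longrightarrow> xs!(j+2) < xs!j) \<and>
               (\<forall>j. even j \<longrightarrow> j+3 < length xs \<longrightarrow> xs!(j+2) < xs!j)"

lemma card_step: "card {j. j+1 < Suc (Suc k) \<and> P j} = card {j. j+1 < Suc k \<and> P j} + (if P k then 1 else 0)"
proof -
  have e: "{j. j+1 < Suc (Suc k) \<and> P j} = {j. j+1 < Suc k \<and> P j} \<union> {j. j = k \<and> P j}" by auto
  have f: "finite {j. j+1 < Suc k \<and> P j}" by (rule finite_subset[of _ "{..k}"]) auto
  have "card ({j. j+1 < Suc k \<and> P j} \<union> {j. j = k \<and> P j}) = card {j. j+1 < Suc k \<and> P j} + card {j. j = k \<and> P j}"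
    by (rule card_Un_disjoint) (use f in auto)
  moreover have "{j. j = k \<and> P j} = (if P k then {k} else {})" by auto
  then have "card {j. j = k \<and> P j} = (if P k then 1 else 0)" by simp
  ultimately show ?thesis using e by simp
qed

lemma D_Suc: "descents_prefix xs (Suc (Suc k)) = descents_prefix xs (Suc k) + (if k+1 < length xs \<and> xs!k > xs!(k+1) then 1 else 0)"
  unfolding descents_prefix_def using card_step[of k "\<lambda>j. j + 1 < length xs \<and> xs ! j > xs ! (j + 1)"] by simp

lemma A_Suc: "ascents_prefix xs (Suc (Suc k)) = ascents_prefix xs (Suc k) + (if k+1 < length xs \<and> xs!k < xs!(k+1) then 1 else 0)"
  unfolding ascents_prefix_def using card_step[of k "\<lambda>j. j + 1 < length xs \<and> xs ! j < xs ! (j + 1)"] by simp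

lemma D_01: "descents_prefix xs 0 = 0" "descents_prefix xs (Suc 0) = 0"
  "ascents_prefix xs 0 = 0" "ascents_prefix xs (Suc 0) = 0"
  unfolding descents_prefix_def ascents_prefix_def by auto

lemma counts_alt:
  assumes "\<forall>j. j+1 < i \<longrightarrow> (even j \<longleftrightarrow> xs!j < xs!(j+1))" "i \<le> length xs" "distinct xs"
  shows "ascents_prefix xs i = i div 2 \<and> descents_prefix xs i = (i - 1) div 2"
  using assms
proof (induction i rule: nat_less_induct)
  case (1 i)
  show ?case
  proof (cases i)
    case 0 then show ?thesis by (simp add: D_01)
  next
    case (Suc i')
    show ?thesis
    proof (cases i')
      case 0 then show ?thesis using Suc by (simp add: D_01)
    next
      case (Suc k)
      have IH: "ascents_prefix xs (Suc k) = Suc k div 2 \<and> descents_prefix xs (Suc k) = k div 2"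
        using "1.IH"[rule_format, of "Suc k"] "1.prems" Suc \<open>i = Suc i'\<close> by simp
      have kl: "k + 1 < length xs" using "1.prems" Suc \<open>i = Suc i'\<close> by simp
      have ne: "xs!k \<noteq> xs!(k+1)" using "1.prems"(3) kl by (simp add: nth_eq_iff_index_eq)
      have alt: "even k \<longleftrightarrow> xs!k < xs!(k+1)" using "1.prems"(1) Suc \<open>i = Suc i'\<close> by simp
      show ?thesis
      proof (cases "even k")
        case True
        then have "xs!k < xs!(k+1)" using alt by simp
        then show ?thesis using IH kl True \<open>i = Suc i'\<close> Suc by (simp add: D_Suc A_Suc)
      next
        case False
        then have "xs!k > xs!(k+1)" using alt ne by simp
        then show ?thesis using IH kl False \<open>i = Suc i'\<close> Suc by (simp add: D_Suc A_Suc)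
      qed
    qed
  qed
qed

lemma alt_ballot: assumes "alt xs" "distinct xs" shows "ballot xs"
  unfolding ballot_def
proof (intro allI impI)
  fix i assume "i \<le> length xs"
  then have "ascents_prefix xs i = i div 2 \<and> descents_prefix xs i = (i - 1) div 2"
    using counts_alt[of i xs] assms unfolding alt_def by auto
  then show "descents_prefix xs i \<le> ascents_prefix xs i" by simp
qed

lemma ballot_alt: assumes "ballot xs" "\<not> contains_123 xs" "distinct xs" shows "alt xs"
proof -
  have "\<forall>j. j+1 < i \<longrightarrow> (even j \<longleftrightarrow> xs!j < xs!(j+1))" if "i \<le> length xs" for i
    using that
  proof (induction i)
    case 0 then show ?case by simp
  next
    case (Suc i)
    have IH: "\<forall>j. j+1 < i \<longrightarrow> (even j \<longleftrightarrow> xs!j < xs!(j+1))" using Suc by simp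
    show ?case
    proof (cases i)
      case 0 then show ?thesis by simp
    next
      case (Suc k)
      have kl: "k + 1 < length xs" using Suc.prems Suc by simp
      have ne: "xs!k \<noteq> xs!(k+1)" using assms(3) kl by (simp add: nth_eq_iff_index_eq)
      have "even k \<longleftrightarrow> xs!k < xs!(k+1)"
      proof (cases "even k")
        case True
        have cnt: "ascents_prefix xs (Suc k) = Suc k div 2 \<and> descents_prefix xs (Suc k) = k div 2"
          using counts_alt[of "Suc k" xs] IH Suc kl assms(3) by simp
        have "xs!k < xs!(k+1)"
        proof (rule ccontr)
          assume "\<not> xs!k < xs!(k+1)"
          then have gt: "xs!k > xs!(k+1)" using ne by simp
          have "descents_prefix xs (Suc (Suc k)) \<le> ascents_prefix xs (Suc (Suc k))"
            using assms(1) kl unfolding ballot_def by simp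
          then show False using cnt gt kl True by (simp add: D_Suc A_Suc)
        qed
        then show ?thesis using True by simp
      next
        case False
        then obtain k' where k': "k = Suc k'" by (cases k) auto
        have "even k'" using False k' by simp
        then have a1: "xs!k' < xs!k" using IH Suc k' by simp
        have "\<not> xs!k < xs!(k+1)"
        proof
          assume "xs!k < xs!(k+1)"
          then have "contains_123 xs" unfolding contains_123_def using a1 kl k'
            by (intro exI[of _ k'] exI[of _ k] exI[of _ "k+1"]) simp
          then show False using assms(2) by simp
        qed
        then show ?thesis using False by simp
      qed
      then show ?thesis using IH Suc by (metis Suc_eq_plus1 less_Suc_eq add_right_cancel)
    qed
  qed
  then show ?thesis unfolding alt_def by blast
qed

lemma no123_chn: assumes "alt xs" "\<not> contains_123 xs" "distinct xs" shows "chn xs"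
  unfolding chn_def
proof (intro conjI allI impI)
  fix j assume j: "odd j" "j+2 < length xs"
  then obtain j' where j': "j = Suc j'" by (cases j) auto
  have a: "xs!j' < xs!j" using assms(1) j j' unfolding alt_def by auto
  have ne: "xs!(j+2) \<noteq> xs!j" using assms(3) j by (simp add: nth_eq_iff_index_eq)
  show "xs!(j+2) < xs!j"
  proof (rule ccontr)
    assume "\<not> xs!(j+2) < xs!j"
    then have "xs!j < xs!(j+2)" using ne by simp
    then have "contains_123 xs" unfolding contains_123_def using a j j'
      by (intro exI[of _ j'] exI[of _ j] exI[of _ "j+2"]) simp
    then show False using assms(2) by simp
  qed
next
  fix j assume j: "even j" "j+3 < length xs"
  have "j+2+1 < length xs \<longrightarrow> (even (j+2) \<longleftrightarrow> xs!(j+2) < xs!(j+2+1))" using assms(1) unfolding alt_def by blast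
  then have a: "xs!(j+2) < xs!(j+3)" using j by (simp add: add.assoc numeral_3_eq_3)
  have ne: "xs!(j+2) \<noteq> xs!j" using assms(3) j by (simp add: nth_eq_iff_index_eq)
  show "xs!(j+2) < xs!j"
  proof (rule ccontr)
    assume "\<not> xs!(j+2) < xs!j"
    then have "xs!j < xs!(j+2)" using ne by simp
    then have "contains_123 xs" unfolding contains_123_def using a j
      by (intro exI[of _ j] exI[of _ "j+2"] exI[of _ "j+3"]) simp
    then show False using assms(2) by simp
  qed
qed

lemma M1: assumes "chn xs" "odd i" "odd j" "i < j" "j < length xs" shows "xs!j < xs!i"
  using assms(3-5)
proof (induction j rule: less_induct)
  case (less j)
  have "2 \<le> j" using less.prems assms(2) by presburger
  then obtain j' where j': "j = j' + 2" by (metis add.commute le_add_diff_inverse)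
  have o: "odd j'" using less.prems j' by simp
  have s: "xs!j < xs!j'" using assms(1) o less.prems j' unfolding chn_def by auto
  show ?case
  proof (cases "j' = i")
    case True then show ?thesis using s by simp
  next
    case False
    then have "i < j'" using less.prems j' assms(2) o by presburger
    then have "xs!j' < xs!i" using less.IH[of j'] j' o less.prems by simp
    then show ?thesis using s by simp
  qed
qed

lemma M2: assumes "chn xs" "even i" "even j" "i < j" "j + 1 < length xs" shows "xs!j < xs!i"
  using assms(3-5)
proof (induction j rule: less_induct)
  case (less j)
  have "2 \<le> j" using less.prems assms(2) by presburger
  then obtain j' where j': "j = j' + 2" by (metis add.commute le_add_diff_inverse)
  have o: "even j'" using less.prems j' by simp
  have s: "xs!j < xs!j'" using assms(1) o less.prems j' unfolding chn_def by auto
  show ?case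
  proof (cases "j' = i")
    case True then show ?thesis using s by simp
  next
    case False
    then have "i < j'" using less.prems j' assms(2) o by presburger
    then have "xs!j' < xs!i" using less.IH[of j'] j' o less.prems by simp
    then show ?thesis using s by simp
  qed
qed

lemma chn_no123: assumes "alt xs" "chn xs" "distinct xs" shows "\<not> contains_123 xs"
proof
  assume "contains_123 xs"
  then obtain a b c where abc: "a < b" "b < c" "c < length xs" "xs!a < xs!b" "xs!b < xs!c"
    unfolding contains_123_def by blast
  have altf: "\<And>j. j+1 < length xs \<Longrightarrow> (even j \<longleftrightarrow> xs!j < xs!(j+1))" using assms(1) unfolding alt_def by auto
  show False
  proof (cases "even a")
    case ea: True
    show False
    proof (cases "even b")
      case True
      then have "xs!b < xs!a" using M2[OF assms(2) ea True] abc by simp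
      then show False using abc by simp
    next
      case ob: False
      show False
      proof (cases "even c")
        case ec: False
        then have "xs!c < xs!b" using M1[OF assms(2) ob ec] abc by simp
        then show False using abc by simp
      next
        case ec: True
        show False
        proof (cases "c + 1 < length xs")
          case True
          then have "xs!c < xs!a" using M2[OF assms(2) ea ec] abc by simp
          then show False using abc by simp
        next
          case False
          obtain c' where c': "c = Suc c'" using abc by (cases c) auto
          have oc': "odd c'" using ec c' by simp
          have d: "xs!c < xs!c'"
          proof -
            have "c'+1 < length xs" using abc c' by simp
            then have "\<not> xs!c' < xs!c" using altf[of c'] oc' c' by simp
            moreover have "xs!c' \<noteq> xs!c" using assms(3) abc c' by (simp add: nth_eq_iff_index_eq)
            ultimately show ?thesis by simp
          qed
          have "xs!c' \<le> xs!b"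
          proof (cases "c' = b")
            case True then show ?thesis by simp
          next
            case False
            then have "b < c'" using abc c' by simp
            then show ?thesis using M1[OF assms(2) ob oc'] abc c' by fastforce
          qed
          then show False using d abc by simp
        qed
      qed
    qed
  next
    case oa: False
    show False
    proof (cases "even b")
      case False
      then have "xs!b < xs!a" using M1[OF assms(2) oa False] abc by simp
      then show False using abc by simp
    next
      case eb: True
      obtain b' where b': "b = Suc b'" using abc by (cases b) auto
      have ob': "odd b'" using eb b' by simp
      have d: "xs!b < xs!b'"
      proof -
        have "b'+1 < length xs" using abc b' by simp
        then have "\<not> xs!b' < xs!b" using altf[of b'] ob' b' by simp
        moreover have "xs!b' \<noteq> xs!b" using assms(3) abc b' by (simp add: nth_eq_iff_index_eq)
        ultimately show ?thesis by simp
      qed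
      have "xs!b' \<le> xs!a"
      proof (cases "a = b'")
        case True then show ?thesis by simp
      next
        case False
        then have "a < b'" using abc b' by simp
        then show ?thesis using M1[OF assms(2) oa ob'] abc b' by fastforce
      qed
      then show False using d abc by simp
    qed
  qed
qed

lemma perms_distinct: "xs \<in> perms n \<Longrightarrow> distinct xs"
  unfolding perms_def by simp

lemma char: assumes "xs \<in> perms n"
  shows "(ballot xs \<and> \<not> contains_123 xs) \<longleftrightarrow> (alt xs \<and> chn xs)"
  using perms_distinct[OF assms] ballot_alt no123_chn alt_ballot chn_no123 by blast

definition odds :: "nat list \<Rightarrow> nat list" where
  "odds xs = map (\<lambda>i. xs!(2*i+1)) [0..<length xs div 2]"
definition evs :: "nat list \<Rightarrow> nat list" where
  "evs xs = map (\<lambda>i. xs!(2*i)) [0..<(length xs + 1) div 2]"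
definition mk :: "nat list \<Rightarrow> nat list \<Rightarrow> nat list" where
  "mk as bs = map (\<lambda>i. if even i then bs!(i div 2) else as!(i div 2)) [0..<length as + length bs]"

lemma sw_distinct: "sorted_wrt (>) (xs::nat list) \<Longrightarrow> distinct xs"
  by (induction xs) auto

lemma len_odds[simp]: "length (odds xs) = length xs div 2" by (simp add: odds_def)
lemma len_evs[simp]: "length (evs xs) = (length xs + 1) div 2" by (simp add: evs_def)
lemma len_mk[simp]: "length (mk as bs) = length as + length bs" by (simp add: mk_def)
lemma nth_odds[simp]: "i < length xs div 2 \<Longrightarrow> odds xs ! i = xs!(2*i+1)" by (simp add: odds_def)
lemma nth_evs[simp]: "i < (length xs + 1) div 2 \<Longrightarrow> evs xs ! i = xs!(2*i)" by (simp add: evs_def)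
lemma nth_mk: "i < length as + length bs \<Longrightarrow> mk as bs ! i = (if even i then bs!(i div 2) else as!(i div 2))"
  by (simp add: mk_def)

lemma mk_inv: "mk (odds xs) (evs xs) = xs"
proof (rule nth_equalityI)
  show "length (mk (odds xs) (evs xs)) = length xs" by simp
next
  fix i assume "i < length (mk (odds xs) (evs xs))"
  then have i: "i < length xs" by simp
  show "mk (odds xs) (evs xs) ! i = xs ! i"
  proof (cases "even i")
    case True
    have "i div 2 < (length xs + 1) div 2" using i True by presburger
    then show ?thesis using True i by (simp add: nth_mk)
  next
    case False
    have "i div 2 < length xs div 2" using i False by presburger
    moreover have "2 * (i div 2) + 1 = i" using False by presburger
    ultimately show ?thesis using False i by (simp add: nth_mk)
  qed
qed

lemma mk_nth_even: "length bs = k \<Longrightarrow> length as = k \<Longrightarrow> i < k \<Longrightarrow> mk as bs ! (2*i) = bs!i"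
  by (simp add: nth_mk)
lemma mk_nth_odd: "length bs = k \<Longrightarrow> length as = k \<Longrightarrow> i < k \<Longrightarrow> mk as bs ! (2*i+1) = as!i"
  by (simp add: nth_mk)

lemma odds_mk: "length as = k \<Longrightarrow> length bs = k \<Longrightarrow> odds (mk as bs) = as"
  by (rule nth_equalityI) (simp_all add: nth_mk)
lemma evs_mk: "length as = k \<Longrightarrow> length bs = k \<Longrightarrow> evs (mk as bs) = bs"
  by (rule nth_equalityI) (simp_all add: nth_mk)

lemma set_oe: "set (odds xs) \<union> set (evs xs) = set xs"
proof -
  have "set xs \<subseteq> set (odds xs) \<union> set (evs xs)"
  proof
    fix x assume "x \<in> set xs"
    then obtain i where i: "i < length xs" "x = xs ! i"
      by (metis in_set_conv_nth)
    show "x \<in> set (odds xs) \<union> set (evs xs)"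
    proof (cases "even i")
      case True
      then have l: "i div 2 < length (evs xs)" using i by simp
      have e: "evs xs ! (i div 2) = xs ! i" using l True by simp
      have m: "evs xs ! (i div 2) \<in> set (evs xs)" by (rule nth_mem[OF l])
      from m e i(2) show ?thesis by (metis UnI2)
    next
      case False
      then have l: "i div 2 < length (odds xs)" using i by simp presburger
      have "2 * (i div 2) + 1 = i" using False by presburger
      then have e: "odds xs ! (i div 2) = xs ! i" using l by simp
      have m: "odds xs ! (i div 2) \<in> set (odds xs)" by (rule nth_mem[OF l])
      from m e i(2) show ?thesis by (metis UnI1)
    qed
  qed
  moreover have "set (odds xs) \<subseteq> set xs" unfolding odds_def by auto
  moreover have "set (evs xs) \<subseteq> set xs"
  proof
    fix x assume "x \<in> set (evs xs)"
    then obtain i where i: "i < (length xs + 1) div 2" "x = xs!(2*i)" unfolding evs_def by auto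
    then have "2*i < length xs" by presburger
    then show "x \<in> set xs" using i by simp
  qed
  ultimately show ?thesis by blast
qed

lemma even_fwd:
  assumes "length xs = 2*k" "distinct xs" "alt xs" "chn xs"
  shows "(odds xs, evs xs) \<in> Q (set xs) k k"
proof -
  have lo: "length (odds xs) = k" "length (evs xs) = k" using assms(1) by simp_all
  have s1: "sorted_wrt (>) (odds xs)"
    unfolding sorted_wrt_iff_nth_less
  proof (intro allI impI)
    fix i j assume "i < j" "j < length (odds xs)"
    then show "odds xs ! i > odds xs ! j" using M1[OF assms(4), of "2*i+1" "2*j+1"] lo assms(1) by simp
  qed
  have s2: "sorted_wrt (>) (evs xs)"
    unfolding sorted_wrt_iff_nth_less
  proof (intro allI impI)
    fix i j assume "i < j" "j < length (evs xs)"
    then show "evs xs ! i > evs xs ! j" using M2[OF assms(4), of "2*i" "2*j"] lo assms(1) by simp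
  qed
  have dj: "set (odds xs) \<inter> set (evs xs) = {}"
  proof (rule ccontr)
    assume "set (odds xs) \<inter> set (evs xs) \<noteq> {}"
    then obtain i j where ij: "i < k" "j < k" "odds xs ! i = evs xs ! j"
      using lo by (metis disjoint_iff in_set_conv_nth)
    then have "xs!(2*i+1) = xs!(2*j)" using assms(1) by simp
    then have "2*i+1 = 2*j" using assms(1,2) ij by (simp add: nth_eq_iff_index_eq)
    then show False by presburger
  qed
  have c: "\<forall>i<k. evs xs ! i < odds xs ! i"
  proof (intro allI impI)
    fix i assume i: "i < k"
    have "2*i+1 < length xs" using i assms(1) by simp
    then have "xs!(2*i) < xs!(2*i+1)" using assms(3) unfolding alt_def by auto
    then show "evs xs ! i < odds xs ! i" using i assms(1) by simp
  qed
  show ?thesis unfolding Q_def using lo s1 s2 dj c set_oe[of xs] by auto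
qed

lemma even_bwd:
  assumes "(as,bs) \<in> Q S k k"
  shows "length (mk as bs) = 2*k" "distinct (mk as bs)" "set (mk as bs) = S"
        "alt (mk as bs)" "chn (mk as bs)" "odds (mk as bs) = as" "evs (mk as bs) = bs"
proof -
  have props: "length as = k" "length bs = k" "sorted_wrt (>) as" "sorted_wrt (>) bs"
       "set as \<inter> set bs = {}" "set as \<union> set bs = S" "\<forall>i<k. bs!i < as!i"
    using assms unfolding Q_def by auto
  show oa: "odds (mk as bs) = as" using odds_mk props by blast
  show eb: "evs (mk as bs) = bs" using evs_mk props by blast
  show l: "length (mk as bs) = 2*k" using props by simp
  show "set (mk as bs) = S" using set_oe[of "mk as bs"] oa eb props by simp
  have nth: "\<And>i. i < 2*k \<Longrightarrow> mk as bs ! i = (if even i then bs!(i div 2) else as!(i div 2))"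
    using props by (simp add: nth_mk)
  have da: "distinct as" "distinct bs" using props(3,4) sw_distinct by auto
  show "distinct (mk as bs)"
    unfolding distinct_conv_nth
  proof (intro allI impI)
    fix i j assume ij: "i < length (mk as bs)" "j < length (mk as bs)" "i \<noteq> j"
    show "mk as bs ! i \<noteq> mk as bs ! j"
    proof (cases "even i"; cases "even j")
      assume "even i" "even j"
      then have "i div 2 \<noteq> j div 2" using ij by presburger
      moreover have "i div 2 < k" "j div 2 < k" using ij l by auto
      ultimately show ?thesis using nth ij l da(2) \<open>even i\<close> \<open>even j\<close> by (simp add: nth_eq_iff_index_eq props)
    next
      assume "\<not> even i" "\<not> even j"
      then have "i div 2 \<noteq> j div 2" using ij by presburger
      moreover have "i div 2 < k" "j div 2 < k" using ij l by auto
      ultimately show ?thesis using nth ij l da(1) \<open>\<not> even i\<close> \<open>\<not> even j\<close> by (simp add: nth_eq_iff_index_eq props)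
    next
      assume "even i" "\<not> even j"
      moreover have "i div 2 < k" "j div 2 < k" using ij l by auto
      moreover have "bs!(i div 2) \<in> set bs" "as!(j div 2) \<in> set as" using calculation props(1,2) by auto
      ultimately show ?thesis using nth ij l props(5) by auto
    next
      assume "\<not> even i" "even j"
      moreover have "i div 2 < k" "j div 2 < k" using ij l by auto
      moreover have "as!(i div 2) \<in> set as" "bs!(j div 2) \<in> set bs" using calculation props(1,2) by auto
      ultimately show ?thesis using nth ij l props(5) by auto
    qed
  qed
  have sa: "\<And>i j. i < j \<Longrightarrow> j < k \<Longrightarrow> as!j < as!i"
    using props(1,3) by (simp add: sorted_wrt_iff_nth_less)
  have sb: "\<And>i j. i < j \<Longrightarrow> j < k \<Longrightarrow> bs!j < bs!i"
    using props(2,4) by (simp add: sorted_wrt_iff_nth_less)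
  show "alt (mk as bs)"
    unfolding alt_def
  proof (intro allI impI)
    fix j assume j: "j + 1 < length (mk as bs)"
    show "even j \<longleftrightarrow> mk as bs ! j < mk as bs ! (j+1)"
    proof (cases "even j")
      case True
      then have "(j+1) div 2 = j div 2" "j div 2 < k" using j l by presburger+
      then show ?thesis using True nth j l props(7) by simp
    next
      case False
      then have e: "(j+1) div 2 = j div 2 + 1" "j div 2 + 1 < k" using j l by presburger+
      have "bs!(j div 2 + 1) < as!(j div 2 + 1)" using props(7) e by simp
      moreover have "as!(j div 2 + 1) < as!(j div 2)" using sa e by simp
      ultimately show ?thesis using False nth j l e by simp
    qed
  qed
  show "chn (mk as bs)"
    unfolding chn_def
  proof (intro conjI allI impI)
    fix j assume j: "odd j" "j + 2 < length (mk as bs)"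
    then have e: "(j+2) div 2 = j div 2 + 1" "j div 2 + 1 < k" using l by presburger+
    have o2: "odd (j+2)" using j by simp
    show "mk as bs ! (j+2) < mk as bs ! j" using nth[of "j+2"] nth[of j] j l e o2 sa[of "j div 2" "j div 2 + 1"] by simp
  next
    fix j assume j: "even j" "j + 3 < length (mk as bs)"
    then have e: "(j+2) div 2 = j div 2 + 1" "j div 2 + 1 < k" using l by presburger+
    have o2: "even (j+2)" using j by simp
    show "mk as bs ! (j+2) < mk as bs ! j" using nth[of "j+2"] nth[of j] j l e o2 sb[of "j div 2" "j div 2 + 1"] by simp
  qed
qed

lemma snoc_altchn:
  assumes ev: "even (length ys)" and d: "distinct (ys@[c])"
  shows "(alt (ys@[c]) \<and> chn (ys@[c])) \<longleftrightarrow> (alt ys \<and> chn ys \<and> (ys \<noteq> [] \<longrightarrow> c < last ys))"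
proof
  assume A: "alt (ys@[c]) \<and> chn (ys@[c])"
  have a1: "\<And>j. j+1 < length ys + 1 \<Longrightarrow> (even j \<longleftrightarrow> (ys@[c])!j < (ys@[c])!(j+1))"
    using A unfolding alt_def by auto
  have "alt ys" unfolding alt_def
  proof (intro allI impI)
    fix j assume "j+1 < length ys"
    then show "even j \<longleftrightarrow> ys!j < ys!(j+1)" using a1[of j] by (simp add: nth_append)
  qed
  moreover have "chn ys" using A unfolding chn_def by (auto simp: nth_append)
  moreover have "ys \<noteq> [] \<longrightarrow> c < last ys"
  proof
    assume ne: "ys \<noteq> []"
    define j where "j = length ys - 1"
    have j: "j + 1 = length ys" "odd j" using ne ev j_def by (cases ys; simp)+
    have "\<not> ys!j < c" using a1[of j] j by (simp add: nth_append)
    moreover have "ys!j \<noteq> c" using d j by (metis distinct_append lessI nth_mem add_diff_cancel_right' less_add_one distinct.simps(2) disjoint_iff list.set_intros(1))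
    ultimately have "c < ys!j" by simp
    then show "c < last ys" using last_conv_nth[OF ne] j(1)[symmetric] by simp
  qed
  ultimately show "alt ys \<and> chn ys \<and> (ys \<noteq> [] \<longrightarrow> c < last ys)" by simp
next
  assume A: "alt ys \<and> chn ys \<and> (ys \<noteq> [] \<longrightarrow> c < last ys)"
  have "alt (ys@[c])" unfolding alt_def
  proof (intro allI impI)
    fix j assume j: "j+1 < length (ys@[c])"
    show "even j \<longleftrightarrow> (ys@[c])!j < (ys@[c])!(j+1)"
    proof (cases "j+1 < length ys")
      case True then show ?thesis using A unfolding alt_def by (simp add: nth_append)
    next
      case False
      then have jl: "j+1 = length ys" using j by simp
      then have ne: "ys \<noteq> []" by auto
      have oj: "odd j" using jl ev by presburger
      have "ys!j = last ys" using last_conv_nth[OF ne] jl[symmetric] by simp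
      then have "c < ys!j" using A ne by simp
      then show ?thesis using oj jl by (simp add: nth_append)
    qed
  qed
  moreover have "chn (ys@[c])" unfolding chn_def
  proof (intro conjI allI impI)
    fix j assume j: "odd j" "j + 2 < length (ys@[c])"
    then have "j + 2 < length ys" using ev by simp presburger
    then show "(ys@[c])!(j+2) < (ys@[c])!j" using A j unfolding chn_def by (simp add: nth_append)
  next
    fix j assume j: "even j" "j + 3 < length (ys@[c])"
    then have "j + 3 < length ys" using ev by simp presburger
    then show "(ys@[c])!(j+2) < (ys@[c])!j" using A j unfolding chn_def by (simp add: nth_append)
  qed
  ultimately show "alt (ys@[c]) \<and> chn (ys@[c])" by simp
qed

lemma odds_snoc: "even (length ys) \<Longrightarrow> odds (ys@[c]) = odds ys"
proof (rule nth_equalityI)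
  assume "even (length ys)"
  then show "length (odds (ys@[c])) = length (odds ys)" by simp
next
  fix i assume ev: "even (length ys)" and i: "i < length (odds (ys@[c]))"
  then have "2*i+1 < length ys" by simp
  then show "odds (ys@[c]) ! i = odds ys ! i" using i by (simp add: nth_append)
qed

lemma last_odds: "even (length ys) \<Longrightarrow> ys \<noteq> [] \<Longrightarrow> last (odds ys) = last ys"
proof -
  assume ev: "even (length ys)" and ne: "ys \<noteq> []"
  then have l: "length ys div 2 > 0" by (cases ys; simp)
  have e: "2 * (length ys div 2 - 1) + 1 = length ys - 1" using ev l by presburger
  have "odds ys \<noteq> []" using l by (metis len_odds length_0_conv less_numeral_extra(3))
  then have "last (odds ys) = odds ys ! (length ys div 2 - 1)" by (simp add: last_conv_nth)
  also have "\<dots> = ys ! (length ys - 1)" using l e by simp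
  also have "\<dots> = last ys" using ne by (simp add: last_conv_nth)
  finally show ?thesis .
qed

lemma E_char: "ballot_avoid_123 n = {xs. distinct xs \<and> set xs = {1..n} \<and> alt xs \<and> chn xs}"
  unfolding ballot_avoid_123_def using char unfolding perms_def by blast

lemma len_of: "distinct xs \<Longrightarrow> set xs = {1..n} \<Longrightarrow> length xs = n"
  by (metis card_atLeastAtMost diff_Suc_1 distinct_card)

lemma card_even: "card (ballot_avoid_123 (2*k)) = card (Q {1..2*k} k k)"
proof -
  let ?E = "ballot_avoid_123 (2*k)"
  have "bij_betw (\<lambda>xs. (odds xs, evs xs)) ?E (Q {1..2*k} k k)"
  proof (rule bij_betw_byWitness[where f' = "\<lambda>(as,bs). mk as bs"])
    show "\<forall>a\<in>?E. (\<lambda>(as,bs). mk as bs) (odds a, evs a) = a" using mk_inv by simp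
    show "\<forall>a'\<in>Q {1..2*k} k k. (\<lambda>xs. (odds xs, evs xs)) ((\<lambda>(as,bs). mk as bs) a') = a'"
      using even_bwd(6,7) by auto
    show "(\<lambda>xs. (odds xs, evs xs)) ` ?E \<subseteq> Q {1..2*k} k k"
    proof clarify
      fix xs assume "xs \<in> ?E"
      then have x: "distinct xs" "set xs = {1..2*k}" "alt xs" "chn xs" using E_char by auto
      then have "length xs = 2*k" using len_of by blast
      then show "(odds xs, evs xs) \<in> Q {1..2*k} k k" using even_fwd x by metis
    qed
    show "(\<lambda>(as,bs). mk as bs) ` Q {1..2*k} k k \<subseteq> ?E"
    proof clarify
      fix as bs assume "(as,bs) \<in> Q {1..2*k} k k"
      then show "mk as bs \<in> ?E" using even_bwd[of as bs "{1..2*k}" k] E_char by auto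
    qed
  qed
  then show ?thesis by (rule bij_betw_same_card)
qed

lemma card_odd: "card (ballot_avoid_123 (2*k+1)) = card (H {1..2*k+1} k k)"
proof -
  let ?E = "ballot_avoid_123 (2*k+1)"
  let ?S = "{1..2*k+1}"
  let ?f = "\<lambda>xs. (odds (take (2*k) xs), evs (take (2*k) xs), last xs)"
  let ?g = "\<lambda>(as,bs,c). mk as bs @ [c]"
  have "bij_betw ?f ?E (H ?S k k)"
  proof (rule bij_betw_byWitness[where f' = ?g])
    show "\<forall>a\<in>?E. ?g (?f a) = a"
    proof
      fix xs assume "xs \<in> ?E"
      then have "length xs = 2*k+1" using E_char len_of by blast
      then have "xs \<noteq> []" "butlast xs = take (2*k) xs" by (auto simp: butlast_conv_take)
      then have "xs = take (2*k) xs @ [last xs]" by (metis append_butlast_last_id)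
      then show "?g (?f xs) = xs" using mk_inv by simp
    qed
    show "\<forall>a'\<in>H ?S k k. ?f (?g a') = a'"
    proof
      fix x assume xH: "x \<in> H ?S k k"
      obtain as bs c where x: "x = (as,bs,c)" by (cases x) auto
      from xH x have "(as,bs,c) \<in> H ?S k k" by simp
      then have Qm: "(as,bs) \<in> Q (?S - {c}) k k" unfolding H_def by auto
      have "length (mk as bs) = 2*k" "odds (mk as bs) = as" "evs (mk as bs) = bs"
        using even_bwd(1)[OF Qm] even_bwd(6)[OF Qm] even_bwd(7)[OF Qm] by auto
      then show "?f (?g x) = x" using x by simp
    qed
    show "?f ` ?E \<subseteq> H ?S k k"
    proof clarify
      fix xs assume "xs \<in> ?E"
      then have x: "distinct xs" "set xs = ?S" "alt xs" "chn xs" using E_char by auto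
      then have l: "length xs = 2*k+1" using len_of by blast
      define ys where "ys = take (2*k) xs"
      define c where "c = last xs"
      have "xs \<noteq> []" "butlast xs = take (2*k) xs" using l by (auto simp: butlast_conv_take)
      then have xs: "xs = ys @ [c]" unfolding ys_def c_def by (metis append_butlast_last_id)
      have ly: "length ys = 2*k" using l ys_def by simp
      have ev: "even (length ys)" using ly by simp
      have dy: "distinct ys" "c \<notin> set ys" using x(1) xs by auto
      have ac: "alt ys" "chn ys" "ys \<noteq> [] \<longrightarrow> c < last ys"
        using snoc_altchn[OF ev] x xs by metis+
      have sy: "set ys = ?S - {c}" using x(2) xs dy by auto
      have cS: "c \<in> ?S" using x(2) xs by auto
      have Qm: "(odds ys, evs ys) \<in> Q (?S - {c}) k k" using even_fwd[OF ly dy(1) ac(1,2)] sy by simp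
      have "odds ys \<noteq> [] \<longrightarrow> c < last (odds ys)"
        using last_odds[OF ev] ac(3) by (metis len_odds length_0_conv div_0 list.size(3))
      then show "?f xs \<in> H ?S k k" unfolding H_def using Qm cS ys_def c_def by simp
    qed
    show "?g ` H ?S k k \<subseteq> ?E"
    proof
      fix x assume "x \<in> ?g ` H ?S k k"
      then obtain as bs c where x: "x = mk as bs @ [c]" and h: "(as,bs,c) \<in> H ?S k k" by auto
      then have cS: "c \<in> ?S" and Qm: "(as,bs) \<in> Q (?S - {c}) k k" and lc: "as \<noteq> [] \<longrightarrow> c < last as"
        unfolding H_def by auto
      let ?ys = "mk as bs"
      note yp = even_bwd[OF Qm]
      have ev: "even (length ?ys)" using yp by simp
      have d: "distinct (?ys @ [c])" using yp by simp
      have "?ys \<noteq> [] \<longrightarrow> c < last ?ys"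
      proof
        assume ne: "?ys \<noteq> []"
        then have "length ?ys \<noteq> 0" using length_0_conv by blast
        then have "2*k \<noteq> 0" unfolding yp(1) .
        then have "length ?ys div 2 > 0" unfolding yp(1) by simp
        then have "as \<noteq> []" using yp(6) len_odds[of ?ys] by (metis length_0_conv less_irrefl)
        then show "c < last ?ys" using lc last_odds[OF ev ne] yp(6) by simp
      qed
      then have "alt (?ys@[c]) \<and> chn (?ys@[c])" using snoc_altchn[OF ev d] yp(4,5) by simp
      moreover have "set (?ys@[c]) = ?S"
      proof -
        have "set (?ys@[c]) = insert c (?S - {c})" using yp(3) by (simp only: set_append set_simps Un_insert_right Un_empty_right)
        then show ?thesis using insert_Diff[OF cS] by (simp only:)
      qed
      ultimately show "x \<in> ?E" unfolding E_char using d x by simp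
    qed
  qed
  then show ?thesis by (rule bij_betw_same_card)
qed

theorem mainTheorem8:
  fixes n :: nat
  assumes "n \<ge> 1"
  shows "card (ballot_avoid_123 n) = catalan ((n + 1) div 2)"
proof (cases "even n")
  case True
  then obtain k where k: "n = 2*k" by blast
  have "int (card (ballot_avoid_123 n)) = g k k"
    using card_even[of k] card_Q[of "{1..2*k}" "2*k" k k] k by simp
  also have "\<dots> = int (catalan k)" using g_catalan by (simp add: catalan_def)
  finally show ?thesis using k by simp
next
  case False
  then obtain k where k: "n = 2*k+1" by (metis oddE)
  have "int (card (ballot_avoid_123 n)) = g (Suc k) k"
    using card_odd[of k] card_H[of "{1..2*k+1}" k k] k by simp
  also have "\<dots> = g (Suc k) (Suc k)" using g_rec_eq by simp
  also have "\<dots> = int (catalan (Suc k))" using g_catalan by (simp add: catalan_def)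
  finally show ?thesis using k by simp
qed

end
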